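(* Let $k=\delta n$ with $\delta = \omega(\log^{-1/3} n)$, and let $G$ be a $k$-regular bipartite graph on $2n$ vertices. Let $Q$ be a monotone increasing property of subgraphs of $G$. If $Q$ holds a.a.s. for $G_H$, then, for almost every graph process in $G$, $Q$ holds for $G_{\tau_I}$, the first graph in the process in which there are no isolated vertices.
   Context: Set $p_1 = \frac{\log n - \log\log\log\log n}{k}$ and $p_2 = \frac{\log n + \log\log\log\log n}{k}$. For $p\in[0,1]$ and a graph $H$, $H(p)$ is the random subgraph of $H$ retaining each edge independently with probability $p$. Let $G_2\sim G(p_2)$ and $G_1 \sim G_2(p_1/p_2)$ (so $G_1\sim G(p_1)$ and $G_1\subseteq G_2$). $G_H$ is the random graph with $G_1\subseteq G_H\subseteq G_2$ obtained by adding to $G_1$, for each isolated vertex $v$ of $G_1$, an edge chosen uniformly at random from $\{e\in E(G_2): v\in e\}$; if any of these sets is empty, or if there are two vertices isolated in $G_1$ that are adjacent in $G_2$, set $G_H = G_1$. A graph process in $G=(V,E)$ is a sequence $(V,\emptyset)=G_0,\dots,G_{|E|}=G$ where each step adds one edge of $G$; "almost every graph process" means a.a.s. for a uniformly random graph process. "A.a.s." means with probability tending to $1$ as $n\to\infty$. *)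

theory Defs
  imports "HOL-Probability.Probability"
begin

text \<open>Graphs: vertex set a finite set of naturals, edges are 2-element sets of vertices.
  Spanning subgraphs of a host graph G are identified with their edge sets F \<subseteq> G.\<close>

definition bipartite_graph :: "nat set \<Rightarrow> nat set set \<Rightarrow> bool" where
  "bipartite_graph V E \<longleftrightarrow>
     (\<exists>A B. A \<union> B = V \<and> A \<inter> B = {} \<and> (\<forall>e\<in>E. \<exists>a\<in>A. \<exists>b\<in>B. e = {a, b}))"

definition regular_graph :: "nat \<Rightarrow> nat set \<Rightarrow> nat set set \<Rightarrow> bool" where
  "regular_graph k V E \<longleftrightarrow>
     (\<forall>e\<in>E. \<exists>u\<in>V. \<exists>v\<in>V. u \<noteq> v \<and> e = {u, v}) \<and> (\<forall>v\<in>V. card {e\<in>E. v \<in> e} = k)"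

definition isolated :: "nat set \<Rightarrow> nat set set \<Rightarrow> nat \<Rightarrow> bool" where
  "isolated V F v \<longleftrightarrow> v \<in> V \<and> (\<forall>e\<in>F. v \<notin> e)"

definition no_isolated :: "nat set \<Rightarrow> nat set set \<Rightarrow> bool" where
  "no_isolated V F \<longleftrightarrow> (\<forall>v\<in>V. \<not> isolated V F v)"

definition mono_increasing :: "nat set set \<Rightarrow> nat set set set \<Rightarrow> bool" where
  "mono_increasing G Q \<longleftrightarrow> Q \<subseteq> Pow G \<and> (\<forall>F F'. F \<in> Q \<longrightarrow> F \<subseteq> F' \<longrightarrow> F' \<subseteq> G \<longrightarrow> F' \<in> Q)"

definition random_subgraph :: "nat set set \<Rightarrow> real \<Rightarrow> nat set set pmf" where
  "random_subgraph E p = map_pmf (\<lambda>f. {e\<in>E. f e}) (Pi_pmf E False (\<lambda>_. bernoulli_pmf p))"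

text \<open>p1, p2 (log = natural logarithm).\<close>
definition p1 :: "nat \<Rightarrow> nat \<Rightarrow> real" where
  "p1 n k = (ln (real n) - ln (ln (ln (ln (real n))))) / real k"

definition p2 :: "nat \<Rightarrow> nat \<Rightarrow> real" where
  "p2 n k = (ln (real n) + ln (ln (ln (ln (real n))))) / real k"

definition GH_step :: "nat set \<Rightarrow> nat set set \<Rightarrow> nat set set \<Rightarrow> nat set set pmf" where
  "GH_step V G1 G2 =
     (let I = {v\<in>V. isolated V G1 v} in
      if (\<exists>v\<in>I. {e\<in>G2. v \<in> e} = {}) \<or> (\<exists>u\<in>I. \<exists>v\<in>I. {u, v} \<in> G2)
      then return_pmf G1
      else map_pmf (\<lambda>c. G1 \<union> c ` I) (Pi_pmf I {} (\<lambda>v. pmf_of_set {e\<in>G2. v \<in> e})))"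

definition GH :: "nat \<Rightarrow> nat \<Rightarrow> nat set \<Rightarrow> nat set set \<Rightarrow> nat set set pmf" where
  "GH n k V G =
     do { G2 \<leftarrow> random_subgraph G (p2 n k);
          G1 \<leftarrow> random_subgraph G2 (p1 n k / p2 n k);
          GH_step V G1 G2 }"

text \<open>Graph process: a uniformly random ordering of the edges; G_i = first i edges.
  tau_I = first i with no isolated vertex; hitting graph = G_{tau_I}.\<close>
definition hit_time :: "nat set \<Rightarrow> nat set list \<Rightarrow> nat" where
  "hit_time V xs = (LEAST i. no_isolated V (set (take i xs)))"

definition hitting_graph :: "nat set \<Rightarrow> nat set list \<Rightarrow> nat set set" where
  "hitting_graph V xs = set (take (hit_time V xs) xs)"

definition graph_process :: "nat set set \<Rightarrow> nat set list pmf" where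
  "graph_process E = pmf_of_set (permutations_of_set E)"

end

theory Submission
  imports Defs "HOL-Real_Asymp.Real_Asymp"
begin


lemma pmf_map_inj_on:
  assumes "inj_on f B" "set_pmf M \<subseteq> B" "x \<in> B"
  shows "pmf (map_pmf f M) (f x) = pmf M x"
proof -
  have "pmf (map_pmf f M) (f x) = measure M (f -` {f x})" by (rule pmf_map)
  also have "\<dots> = measure M (f -` {f x} \<inter> set_pmf M)" by (simp add: measure_Int_set_pmf)
  also have "f -` {f x} \<inter> set_pmf M = {x} \<inter> set_pmf M"
    using assms by (auto dest: inj_onD)
  also have "measure M \<dots> = pmf M x" by (simp add: measure_Int_set_pmf measure_pmf_single)
  finally show ?thesis .
qed

lemma pmf_uniformI:
  assumes "finite S" "S \<noteq> {}" "set_pmf \<mu> \<subseteq> S" "\<And>x y. x \<in> S \<Longrightarrow> y \<in> S \<Longrightarrow> pmf \<mu> x = pmf \<mu> y"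
  shows "\<mu> = pmf_of_set S"
proof -
  obtain x0 where x0: "x0 \<in> S" using assms(2) by blast
  have "(\<Sum>x\<in>S. pmf \<mu> x) = 1" using assms by (intro sum_pmf_eq_1)
  also have "(\<Sum>x\<in>S. pmf \<mu> x) = (\<Sum>x\<in>S. pmf \<mu> x0)" using assms(4)[OF _ x0] by (intro sum.cong) blast+
  finally have c: "real (card S) * pmf \<mu> x0 = 1" by simp
  show ?thesis
  proof (rule pmf_eqI)
    fix x show "pmf \<mu> x = pmf (pmf_of_set S) x"
    proof (cases "x \<in> S")
      case True
      then have "pmf \<mu> x = pmf \<mu> x0" using assms(4)[OF _ x0] by blast
      then show ?thesis using c True assms(1,2) by (simp add: field_simps)
    next
      case False
      then have "x \<notin> set_pmf \<mu>" using assms by auto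
      then show ?thesis using False assms by (simp add: set_pmf_eq)
    qed
  qed
qed

definition perm :: "'a set \<Rightarrow> 'a list pmf" where
  "perm A = pmf_of_set (permutations_of_set A)"

lemma set_perm: "finite A \<Longrightarrow> set_pmf (perm A) = permutations_of_set A"
  unfolding perm_def by (simp add: permutations_of_set_nonempty)

lemma map_perm:
  assumes "finite A" "inj_on \<sigma> A"
  shows "map_pmf (map \<sigma>) (perm A) = perm (\<sigma> ` A)"
proof -
  have "inj_on (map \<sigma>) (permutations_of_set A)"
    by (rule inj_on_mapI, rule inj_on_subset[OF assms(2)]) (auto dest: permutations_of_setD)
  then show ?thesis unfolding perm_def using assms
    by (subst map_pmf_of_set_inj) (auto simp: permutations_of_set_image_inj permutations_of_set_nonempty)
qed

lemma set_rs: "finite A \<Longrightarrow> set_pmf (random_subgraph A p) \<subseteq> Pow A"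
  unfolding random_subgraph_def by auto

lemma pmf_rs:
  assumes "finite A" "0 \<le> p" "p \<le> 1"
  shows "pmf (random_subgraph A p) S = (if S \<subseteq> A then p ^ card S * (1 - p) ^ card (A - S) else 0)"
proof (cases "S \<subseteq> A")
  case True
  define g where "g = (\<lambda>e. e \<in> S)"
  let ?B = "{f. \<forall>x. x \<notin> A \<longrightarrow> f x = False}"
  have inj: "inj_on (\<lambda>f. {e\<in>A. f e}) ?B" by (auto simp: inj_on_def fun_eq_iff)
  have gB: "g \<in> ?B" using True by (auto simp: g_def)
  have Sg: "S = {e\<in>A. g e}" using True by (auto simp: g_def)
  have "pmf (random_subgraph A p) S = pmf (Pi_pmf A False (\<lambda>_. bernoulli_pmf p)) g"
    unfolding random_subgraph_def Sg
    by (rule pmf_map_inj_on[OF inj set_Pi_pmf_subset[OF assms(1)] gB])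
  also have "\<dots> = (\<Prod>e\<in>A. pmf (bernoulli_pmf p) (g e))"
    using gB assms(1) by (subst pmf_Pi) auto
  also have "\<dots> = (\<Prod>e\<in>A. if e \<in> S then p else 1 - p)"
    using assms by (intro prod.cong) (auto simp: g_def)
  also have "\<dots> = p ^ card S * (1 - p) ^ card (A - S)"
    using assms(1) True by (subst prod.If_cases) (auto simp: Int_absorb1 Diff_eq[symmetric] Int_commute)
  finally show ?thesis using True by simp
next
  case False
  then have "S \<notin> set_pmf (random_subgraph A p)" using set_rs[OF assms(1)] by auto
  then show ?thesis using False by (simp add: set_pmf_eq)
qed

lemma map_rs:
  assumes "finite A" "inj_on h A" "0 \<le> p" "p \<le> 1"
  shows "map_pmf (image h) (random_subgraph A p) = random_subgraph (h ` A) p"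
proof (rule pmf_eqI)
  fix S
  show "pmf (map_pmf (image h) (random_subgraph A p)) S = pmf (random_subgraph (h ` A) p) S"
  proof (cases "S \<subseteq> h ` A")
    case True
    define S' where "S' = A \<inter> h -` S"
    have S: "S = h ` S'" using True by (auto simp: S'_def)
    have "pmf (map_pmf (image h) (random_subgraph A p)) S = pmf (random_subgraph A p) S'"
      unfolding S by (rule pmf_map_inj_on[OF inj_on_image_Pow[OF assms(2)] set_rs[OF assms(1)]]) (auto simp: S'_def)
    also have "\<dots> = p ^ card S' * (1 - p) ^ card (A - S')"
      using assms by (simp add: pmf_rs S'_def)
    also have "card S' = card S" unfolding S
      by (rule card_image[symmetric], rule inj_on_subset[OF assms(2)]) (auto simp: S'_def)
    also have "card (A - S') = card (h ` A - S)"
    proof -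
      have "h ` A - h ` S' = h ` (A - S')"
        by (rule inj_on_image_set_diff[symmetric, OF assms(2)]) (auto simp: S'_def)
      moreover have "card (h ` (A - S')) = card (A - S')"
        by (rule card_image, rule inj_on_subset[OF assms(2)]) auto
      ultimately show ?thesis using S by simp
    qed
    finally show ?thesis using True assms by (simp add: pmf_rs)
  next
    case False
    have "S \<notin> set_pmf (map_pmf (image h) (random_subgraph A p))"
      using False set_rs[OF assms(1)] by auto
    then show ?thesis using False assms by (simp add: set_pmf_eq pmf_rs)
  qed
qed



definition K :: "'a set \<Rightarrow> 'a set \<Rightarrow> 'a set \<Rightarrow> 'a list pmf" where
  "K E H1 H2 = do { a \<leftarrow> perm H1; b \<leftarrow> perm (H2 - H1); c \<leftarrow> perm (E - H2); return_pmf (a @ b @ c) }"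

definition Om :: "nat set set \<Rightarrow> real \<Rightarrow> real \<Rightarrow>
    (nat set set \<times> nat set set \<times> nat set list \<times> nat set list \<times> nat set list) pmf" where
  "Om E p r = do { G2 \<leftarrow> random_subgraph E p; G1 \<leftarrow> random_subgraph G2 r;
     a \<leftarrow> perm G1; b \<leftarrow> perm (G2 - G1); c \<leftarrow> perm (E - G2); return_pmf (G1, G2, a, b, c) }"

definition mu :: "nat set set \<Rightarrow> real \<Rightarrow> real \<Rightarrow> nat set list pmf" where
  "mu E p r = do { G2 \<leftarrow> random_subgraph E p; G1 \<leftarrow> random_subgraph G2 r; K E G1 G2 }"

lemma mu_Om: "map_pmf (\<lambda>(G1, G2, a, b, c). a @ b @ c) (Om E p r) = mu E p r"
  unfolding Om_def mu_def K_def by (simp add: map_bind_pmf)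

lemma map_K:
  assumes "finite E" "bij_betw \<sigma> E E" "H1 \<subseteq> H2" "H2 \<subseteq> E"
  shows "map_pmf (map \<sigma>) (K E H1 H2) = K E (\<sigma> ` H1) (\<sigma> ` H2)"
proof -
  have inj: "inj_on \<sigma> E" using assms(2) by (simp add: bij_betw_def)
  have fH2: "finite H2" by (rule finite_subset[OF assms(4) assms(1)])
  have fH1: "finite H1" by (rule finite_subset[OF assms(3) fH2])
  have f1: "finite H1" "finite (H2 - H1)" "finite (E - H2)" using fH1 fH2 assms(1) by auto
  have "map_pmf (map \<sigma>) (K E H1 H2) = do { a \<leftarrow> map_pmf (map \<sigma>) (perm H1);
      b \<leftarrow> map_pmf (map \<sigma>) (perm (H2 - H1)); c \<leftarrow> map_pmf (map \<sigma>) (perm (E - H2)); return_pmf (a @ b @ c) }"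
    unfolding K_def by (simp add: map_bind_pmf bind_map_pmf)
  also have "\<dots> = do { a \<leftarrow> perm (\<sigma> ` H1);
      b \<leftarrow> perm (\<sigma> ` (H2 - H1)); c \<leftarrow> perm (\<sigma> ` (E - H2)); return_pmf (a @ b @ c) }"
    using f1 inj assms by (subst (1 2 3) map_perm) (auto intro: inj_on_subset)
  also have "\<sigma> ` (H2 - H1) = \<sigma> ` H2 - \<sigma> ` H1"
    using assms by (intro inj_on_image_set_diff[OF inj]) auto
  also have "\<sigma> ` (E - H2) = \<sigma> ` E - \<sigma> ` H2"
    using assms by (intro inj_on_image_set_diff[OF inj]) auto
  also have "\<sigma> ` E = E" using assms(2) by (simp add: bij_betw_def)
  finally show ?thesis unfolding K_def .
qed

lemma mu_inv:
  assumes "finite E" "bij_betw \<sigma> E E" "0 \<le> p" "p \<le> 1" "0 \<le> r" "r \<le> 1"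
  shows "map_pmf (map \<sigma>) (mu E p r) = mu E p r"
proof -
  have inj: "inj_on \<sigma> E" using assms(2) by (simp add: bij_betw_def)
  have "map_pmf (map \<sigma>) (mu E p r) = do { G2 \<leftarrow> random_subgraph E p; G1 \<leftarrow> random_subgraph G2 r;
      map_pmf (map \<sigma>) (K E G1 G2) }"
    unfolding mu_def by (simp add: map_bind_pmf)
  also have "\<dots> = do { G2 \<leftarrow> random_subgraph E p; G1 \<leftarrow> random_subgraph G2 r; K E (\<sigma> ` G1) (\<sigma> ` G2) }"
  proof (intro bind_pmf_cong refl)
    fix G2 G1 assume h: "G2 \<in> set_pmf (random_subgraph E p)" "G1 \<in> set_pmf (random_subgraph G2 r)"
    have "G2 \<subseteq> E" using h(1) set_rs[OF assms(1)] by auto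
    moreover have "G1 \<subseteq> G2" using h(2) set_rs[of G2] \<open>G2 \<subseteq> E\<close> assms(1) finite_subset by blast
    ultimately show "map_pmf (map \<sigma>) (K E G1 G2) = K E (\<sigma> ` G1) (\<sigma> ` G2)"
      using assms by (intro map_K) auto
  qed
  also have "\<dots> = do { G2 \<leftarrow> random_subgraph E p; H1 \<leftarrow> map_pmf (image \<sigma>) (random_subgraph G2 r); K E H1 (\<sigma> ` G2) }"
    by (simp add: bind_map_pmf)
  also have "\<dots> = do { G2 \<leftarrow> random_subgraph E p; H1 \<leftarrow> random_subgraph (\<sigma> ` G2) r; K E H1 (\<sigma> ` G2) }"
  proof (intro bind_pmf_cong refl)
    fix G2 assume h: "G2 \<in> set_pmf (random_subgraph E p)"
    have "G2 \<subseteq> E" using h(1) set_rs[OF assms(1)] by auto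
    then show "map_pmf (image \<sigma>) (random_subgraph G2 r) = random_subgraph (\<sigma> ` G2) r"
      using assms inj by (intro map_rs) (auto intro: finite_subset inj_on_subset)
  qed
  also have "\<dots> = do { H2 \<leftarrow> map_pmf (image \<sigma>) (random_subgraph E p); H1 \<leftarrow> random_subgraph H2 r; K E H1 H2 }"
    by (simp add: bind_map_pmf)
  also have "map_pmf (image \<sigma>) (random_subgraph E p) = random_subgraph (\<sigma> ` E) p"
    using assms inj by (intro map_rs) auto
  also have "\<sigma> ` E = E" using assms(2) by (simp add: bij_betw_def)
  finally show ?thesis unfolding mu_def .
qed

lemma set_mu:
  assumes "finite E"
  shows "set_pmf (mu E p r) \<subseteq> permutations_of_set E"
proof
  fix xs assume "xs \<in> set_pmf (mu E p r)"
  then obtain G2 G1 a b c where h: "G2 \<in> set_pmf (random_subgraph E p)" "G1 \<in> set_pmf (random_subgraph G2 r)"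
    "a \<in> set_pmf (perm G1)" "b \<in> set_pmf (perm (G2 - G1))" "c \<in> set_pmf (perm (E - G2))" "xs = a @ b @ c"
    unfolding mu_def K_def by auto
  have s: "G2 \<subseteq> E" using h(1) set_rs[OF assms(1)] by auto
  have fG2: "finite G2" using s assms finite_subset by blast
  have s1: "G1 \<subseteq> G2" using h(2) set_rs[OF fG2] by auto
  have fG1: "finite G1" using s1 fG2 finite_subset by blast
  have a: "a \<in> permutations_of_set G1" using h(3) fG1 by (simp add: set_perm)
  have b: "b \<in> permutations_of_set (G2 - G1)" using h(4) fG2 by (simp add: set_perm)
  have c: "c \<in> permutations_of_set (E - G2)" using h(5) assms by (simp add: set_perm)
  show "xs \<in> permutations_of_set E"
    using a b c s s1 h(6) by (auto simp: permutations_of_set_def)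
qed

lemma mu_uniform:
  assumes "finite E" "0 \<le> p" "p \<le> 1" "0 \<le> r" "r \<le> 1"
  shows "mu E p r = perm E"
  unfolding perm_def
proof (rule pmf_uniformI)
  show "finite (permutations_of_set E)" "permutations_of_set E \<noteq> {}"
    using assms by (auto simp: permutations_of_set_nonempty)
  show "set_pmf (mu E p r) \<subseteq> permutations_of_set E" using set_mu[OF assms(1)] .
  fix xs ys assume xs: "xs \<in> permutations_of_set E" and ys: "ys \<in> permutations_of_set E"
  define \<sigma> where "\<sigma> = (\<lambda>e. ys ! (THE i. i < length xs \<and> xs ! i = e))"
  have dx: "distinct xs" "set xs = E" using xs by (auto dest: permutations_of_setD)
  have dy: "distinct ys" "set ys = E" using ys by (auto dest: permutations_of_setD)
  have len: "length xs = length ys" using dx dy distinct_card by metis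
  have sn: "\<sigma> (xs ! i) = ys ! i" if "i < length xs" for i
  proof -
    have "(THE j. j < length xs \<and> xs ! j = xs ! i) = i"
      using that dx(1) by (intro the_equality) (auto simp: nth_eq_iff_index_eq)
    then show ?thesis by (simp add: \<sigma>_def)
  qed
  have m: "map \<sigma> xs = ys"
    by (rule nth_equalityI) (auto simp: len sn)
  have inj: "inj_on \<sigma> E" using dy(1) m dx distinct_map by metis
  have bij: "bij_betw \<sigma> E E" unfolding bij_betw_def using inj m dx dy
    by (metis list.set_map)
  have injl: "inj_on (map \<sigma>) (lists E)"
    by (rule inj_on_mapI, rule inj_on_subset[OF inj]) auto
  have "pmf (mu E p r) ys = pmf (map_pmf (map \<sigma>) (mu E p r)) (map \<sigma> xs)"
    using mu_inv[OF assms(1) bij assms(2-5)] m by simp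
  also have "\<dots> = pmf (mu E p r) xs"
    by (rule pmf_map_inj_on[OF injl]) (use set_mu[OF assms(1), of p r] permutations_of_set_lists[of E] xs in blast)+
  finally show "pmf (mu E p r) xs = pmf (mu E p r) ys" by simp
qed



definition sw :: "'a \<Rightarrow> 'a \<Rightarrow> 'a \<Rightarrow> 'a" where
  "sw a b e = (if e = a then b else if e = b then a else e)"

lemma first_uniform:
  fixes T :: "'e set" and I :: "'v set" and P :: "'v \<Rightarrow> 'e \<Rightarrow> bool" and d :: 'e
  assumes fT: "finite T" and fI: "finite I"
    and ne: "\<And>v. v \<in> I \<Longrightarrow> \<exists>e\<in>T. P v e"
    and disj: "\<And>u v e. u \<in> I \<Longrightarrow> v \<in> I \<Longrightarrow> e \<in> T \<Longrightarrow> P u e \<Longrightarrow> P v e \<Longrightarrow> u = v"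
  shows "map_pmf (\<lambda>b v. if v \<in> I then hd (filter (P v) b) else d) (perm T)
           = Pi_pmf I d (\<lambda>v. pmf_of_set {e\<in>T. P v e})"
proof -
  define S where "S = (\<lambda>v. {e\<in>T. P v e})"
  define F where "F = (\<lambda>b v. if v \<in> I then hd (filter (P v) b) else d)"
  define \<mu> where "\<mu> = map_pmf F (perm T)"
  have Sne: "S v \<noteq> {}" "finite (S v)" if "v \<in> I" for v using ne[OF that] fT by (auto simp: S_def)
  have rhs: "Pi_pmf I d (\<lambda>v. pmf_of_set (S v)) = pmf_of_set (PiE_dflt I d S)"
    using Sne fI by (intro Pi_pmf_of_set) auto
  have filt_ne: "filter (P v) b \<noteq> []" if "v \<in> I" "b \<in> permutations_of_set T" for v b
    using ne[OF that(1)] that(2) by (auto simp: filter_empty_conv dest: permutations_of_setD)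
  have Fin: "F b \<in> PiE_dflt I d S" if "b \<in> permutations_of_set T" for b
  proof -
    have "hd (filter (P v) b) \<in> S v" if "v \<in> I" for v
    proof -
      have "hd (filter (P v) b) \<in> set (filter (P v) b)" using filt_ne[OF that \<open>b \<in> _\<close>] by (rule hd_in_set)
      then show ?thesis using \<open>b \<in> _\<close> by (auto simp: S_def dest: permutations_of_setD)
    qed
    then show ?thesis by (auto simp: PiE_dflt_def F_def)
  qed
  have supp: "set_pmf \<mu> \<subseteq> PiE_dflt I d S"
    unfolding \<mu>_def using Fin fT by (auto simp: set_perm)
  have fin: "finite (PiE_dflt I d S)" using fI Sne by (intro finite_PiE_dflt) auto
  have nonempty: "PiE_dflt I d S \<noteq> {}" using Sne by simp
  have "\<mu> = pmf_of_set (PiE_dflt I d S)"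
  proof (rule pmf_uniformI[OF fin nonempty supp])
    fix c c' assume c: "c \<in> PiE_dflt I d S" and c': "c' \<in> PiE_dflt I d S"
    define own where "own = (\<lambda>e. THE v. v \<in> I \<and> P v e)"
    have own: "own e = v" if "v \<in> I" "e \<in> T" "P v e" for v e
      unfolding own_def using that disj by blast
    define \<sigma> where "\<sigma> = (\<lambda>e. if e \<in> T \<and> (\<exists>v\<in>I. P v e) then sw (c (own e)) (c' (own e)) e else e)"
    have cS: "c v \<in> T" "P v (c v)" "c' v \<in> T" "P v (c' v)" if "v \<in> I" for v
      using c c' that by (auto simp: PiE_dflt_def S_def)
    have \<sigma>1: "\<sigma> e = sw (c v) (c' v) e" if "v \<in> I" "e \<in> T" "P v e" for v e
      using that own by (auto simp: \<sigma>_def)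
    have \<sigma>2: "\<sigma> e = e" if "e \<in> T" "\<not>(\<exists>v\<in>I. P v e)" for e
      using that by (auto simp: \<sigma>_def)
    have swin: "sw (c v) (c' v) e \<in> T \<and> P v (sw (c v) (c' v) e)" if "v \<in> I" "e \<in> T" "P v e" for v e
      using cS[OF that(1)] that by (auto simp: sw_def)
    have \<sigma>T: "\<sigma> e \<in> T" if "e \<in> T" for e
      using that swin \<sigma>1 \<sigma>2 by metis
    have \<sigma>P: "P v (\<sigma> e) = P v e" if "v \<in> I" "e \<in> T" for v e
    proof (cases "\<exists>u\<in>I. P u e")
      case True
      then obtain u where u: "u \<in> I" "P u e" by blast
      have "P u (\<sigma> e)" "\<sigma> e \<in> T" using swin[OF u(1) that(2) u(2)] \<sigma>1[OF u(1) that(2) u(2)] by auto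
      then show ?thesis using disj[OF u(1) that(1)] that u by metis
    next
      case False
      then show ?thesis using \<sigma>2[OF that(2)] by simp
    qed
    have \<sigma>\<sigma>: "\<sigma> (\<sigma> e) = e" if "e \<in> T" for e
    proof (cases "\<exists>u\<in>I. P u e")
      case True
      then obtain u where u: "u \<in> I" "P u e" by blast
      have h: "P u (\<sigma> e)" "\<sigma> e \<in> T" using swin[OF u(1) that u(2)] \<sigma>1[OF u(1) that u(2)] by auto
      show ?thesis using \<sigma>1[OF u(1) h(2) h(1)] \<sigma>1[OF u(1) that u(2)] by (auto simp: sw_def)
    next
      case False
      then show ?thesis using \<sigma>2[OF that] by simp
    qed
    have bij: "bij_betw \<sigma> T T"
      by (rule bij_betwI[where g = \<sigma>]) (auto simp: \<sigma>T \<sigma>\<sigma>)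
    have injT: "inj_on \<sigma> T" using bij by (simp add: bij_betw_def)
    have \<sigma>c: "\<sigma> (c v) = c' v" if "v \<in> I" for v
      using \<sigma>1[OF that cS(1,2)[OF that]] by (simp add: sw_def)
    define \<tau> where "\<tau> = (\<lambda>f v. if v \<in> I then \<sigma> (f v) else d)"
    have \<tau>c: "\<tau> c = c'" using c' \<sigma>c by (auto simp: \<tau>_def fun_eq_iff PiE_dflt_def)
    have F\<sigma>: "F (map \<sigma> b) = \<tau> (F b)" if b: "b \<in> permutations_of_set T" for b
    proof -
      have "hd (filter (P v) (map \<sigma> b)) = \<sigma> (hd (filter (P v) b))" if "v \<in> I" for v
      proof -
        have "filter (P v \<circ> \<sigma>) b = filter (P v) b"
          using b \<sigma>P[OF that] by (intro filter_cong) (auto dest: permutations_of_setD)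
        then show ?thesis using filt_ne[OF that b] by (simp add: filter_map hd_map)
      qed
      then show ?thesis by (auto simp: F_def \<tau>_def fun_eq_iff)
    qed
    have "map_pmf \<tau> \<mu> = map_pmf (F \<circ> map \<sigma>) (perm T)"
      unfolding \<mu>_def pmf.map_comp using F\<sigma> fT by (intro map_pmf_cong) (auto simp: set_perm)
    also have "\<dots> = map_pmf F (map_pmf (map \<sigma>) (perm T))" by (simp add: pmf.map_comp)
    also have "map_pmf (map \<sigma>) (perm T) = perm (\<sigma> ` T)" using fT injT by (rule map_perm)
    also have "\<sigma> ` T = T" using bij by (simp add: bij_betw_def)
    finally have inv: "map_pmf \<tau> \<mu> = \<mu>" unfolding \<mu>_def .
    have inj\<tau>: "inj_on \<tau> (PiE_dflt I d S)"
    proof (rule inj_onI)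
      fix f g assume f: "f \<in> PiE_dflt I d S" and g: "g \<in> PiE_dflt I d S" and eq: "\<tau> f = \<tau> g"
      show "f = g"
      proof
        fix v show "f v = g v"
        proof (cases "v \<in> I")
          case True
          then have "\<sigma> (f v) = \<sigma> (g v)" using fun_cong[OF eq, of v] by (simp add: \<tau>_def)
          moreover have "f v \<in> T" "g v \<in> T" using f g True by (auto simp: PiE_dflt_def S_def)
          ultimately show ?thesis using injT by (auto dest: inj_onD)
        next
          case False then show ?thesis using f g by (auto simp: PiE_dflt_def)
        qed
      qed
    qed
    have "pmf \<mu> c' = pmf (map_pmf \<tau> \<mu>) (\<tau> c)" using inv \<tau>c by simp
    also have "\<dots> = pmf \<mu> c" by (rule pmf_map_inj_on[OF inj\<tau> supp c])
    finally show "pmf \<mu> c = pmf \<mu> c'" by simp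
  qed
  then show ?thesis using rhs unfolding \<mu>_def F_def S_def by simp
qed



definition psi :: "nat set \<Rightarrow> nat set set \<Rightarrow> nat set set \<Rightarrow> nat set list \<Rightarrow> nat set set" where
  "psi V G1 G2 b =
     (let I = {v\<in>V. isolated V G1 v} in
      if (\<exists>v\<in>I. {e\<in>G2. v \<in> e} = {}) \<or> (\<exists>u\<in>I. \<exists>v\<in>I. {u, v} \<in> G2)
      then G1
      else G1 \<union> (\<lambda>v. hd (filter (\<lambda>e. v \<in> e) b)) ` I)"

definition two_sets :: "nat set set \<Rightarrow> bool" where
  "two_sets E \<longleftrightarrow> (\<forall>e\<in>E. \<exists>x y. x \<noteq> y \<and> e = {x, y})"

lemma step_repr:
  assumes fV: "finite V" and fE: "finite E" and tw: "two_sets E" and s: "G1 \<subseteq> G2" "G2 \<subseteq> E"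
  shows "GH_step V G1 G2 = map_pmf (psi V G1 G2) (perm (G2 - G1))"
proof -
  define I where "I = {v\<in>V. isolated V G1 v}"
  have fI: "finite I" using fV by (auto simp: I_def)
  have fT: "finite (G2 - G1)" using fE s finite_subset by blast
  show ?thesis
  proof (cases "(\<exists>v\<in>I. {e\<in>G2. v \<in> e} = {}) \<or> (\<exists>u\<in>I. \<exists>v\<in>I. {u, v} \<in> G2)")
    case True
    then show ?thesis unfolding GH_step_def psi_def I_def[symmetric] Let_def
      by (simp add: map_pmf_def bind_return_pmf)
  next
    case False
    have eqS: "{e\<in>G2. v \<in> e} = {e\<in>G2 - G1. v \<in> e}" if "v \<in> I" for v
      using that by (auto simp: I_def isolated_def)
    have ne: "\<exists>e\<in>G2 - G1. v \<in> e" if "v \<in> I" for v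
      using False that eqS[OF that] by blast
    have disj: "u = v" if h: "u \<in> I" "v \<in> I" "e \<in> G2 - G1" "u \<in> e" "v \<in> e" for u v e
    proof (rule ccontr)
      assume uv: "u \<noteq> v"
      have "e \<in> E" using h(3) s by auto
      then obtain x y where "x \<noteq> y" "e = {x, y}" using tw unfolding two_sets_def by blast
      then have "e = {u, v}" using h uv by auto
      then show False using False h by auto
    qed
    have "GH_step V G1 G2 = map_pmf (\<lambda>c. G1 \<union> c ` I) (Pi_pmf I {} (\<lambda>v. pmf_of_set {e\<in>G2. v \<in> e}))"
      unfolding GH_step_def I_def[symmetric] Let_def by (rule if_not_P[OF False])
    also have "Pi_pmf I {} (\<lambda>v. pmf_of_set {e\<in>G2. v \<in> e}) = Pi_pmf I {} (\<lambda>v. pmf_of_set {e\<in>G2 - G1. v \<in> e})"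
      using eqS by (intro Pi_pmf_cong) auto
    also have "\<dots> = map_pmf (\<lambda>b v. if v \<in> I then hd (filter (\<lambda>e. v \<in> e) b) else {}) (perm (G2 - G1))"
      by (rule first_uniform[of "G2 - G1" I "\<lambda>v e. v \<in> e" "{}", OF fT fI, symmetric])
         (use ne disj in blast)+
    also have "map_pmf (\<lambda>c. G1 \<union> c ` I) \<dots> = map_pmf (psi V G1 G2) (perm (G2 - G1))"
      unfolding pmf.map_comp
      by (intro map_pmf_cong refl) (use False in \<open>auto simp: psi_def I_def[symmetric] Let_def\<close>)
    finally show ?thesis .
  qed
qed

lemma set_Om:
  assumes "finite E" "(G1, G2, a, b, c) \<in> set_pmf (Om E p r)"
  shows "G1 \<subseteq> G2" "G2 \<subseteq> E" "a \<in> permutations_of_set G1" "b \<in> permutations_of_set (G2 - G1)"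
    "c \<in> permutations_of_set (E - G2)"
proof -
  from assms(2) obtain H2 H1 where h: "H2 \<in> set_pmf (random_subgraph E p)" "H1 \<in> set_pmf (random_subgraph H2 r)"
    "(G1, G2, a, b, c) \<in> set_pmf (do { a \<leftarrow> perm H1; b \<leftarrow> perm (H2 - H1); c \<leftarrow> perm (E - H2); return_pmf (H1, H2, a, b, c) })"
    unfolding Om_def by auto
  have s: "H2 \<subseteq> E" using h(1) set_rs[OF assms(1)] by auto
  have fH2: "finite H2" using s assms(1) finite_subset by blast
  have s1: "H1 \<subseteq> H2" using h(2) set_rs[OF fH2] by auto
  have fH1: "finite H1" using s1 fH2 finite_subset by blast
  have eq: "G1 = H1" "G2 = H2" and hh: "a \<in> set_pmf (perm H1)" "b \<in> set_pmf (perm (H2 - H1))" "c \<in> set_pmf (perm (E - H2))"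
    using h(3) by auto
  show "G1 \<subseteq> G2" "G2 \<subseteq> E" using s s1 eq by auto
  show "a \<in> permutations_of_set G1" "b \<in> permutations_of_set (G2 - G1)" "c \<in> permutations_of_set (E - G2)"
    using hh eq fH1 fH2 assms(1) by (auto simp: set_perm)
qed

lemma GH_Om:
  assumes fV: "finite V" and fE: "finite E" and tw: "two_sets E"
  shows "GH n k V E = map_pmf (\<lambda>(G1, G2, a, b, c). psi V G1 G2 b) (Om E (p2 n k) (p1 n k / p2 n k))"
proof -
  have "GH n k V E = do { G2 \<leftarrow> random_subgraph E (p2 n k); G1 \<leftarrow> random_subgraph G2 (p1 n k / p2 n k);
     map_pmf (psi V G1 G2) (perm (G2 - G1)) }"
    unfolding GH_def
  proof (intro bind_pmf_cong refl)
    fix G2 G1 assume h: "G2 \<in> set_pmf (random_subgraph E (p2 n k))" "G1 \<in> set_pmf (random_subgraph G2 (p1 n k / p2 n k))"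
    have s: "G2 \<subseteq> E" using h(1) set_rs[OF fE] by auto
    have fG2: "finite G2" using s fE finite_subset by blast
    have s1: "G1 \<subseteq> G2" using h(2) set_rs[OF fG2] by auto
    show "GH_step V G1 G2 = map_pmf (psi V G1 G2) (perm (G2 - G1))"
      by (rule step_repr[OF fV fE tw s1 s])
  qed
  also have "\<dots> = map_pmf (\<lambda>(G1, G2, a, b, c). psi V G1 G2 b) (Om E (p2 n k) (p1 n k / p2 n k))"
    unfolding Om_def map_pmf_def by (simp add: bind_assoc_pmf bind_return_pmf)
  finally show ?thesis .
qed

lemma psi_sub_hit:
  assumes noiso: "no_isolated V (set xs)" and dist: "distinct xs" and xs: "xs = a @ b @ c"
    and sa: "set a = G1" and sb: "set b = G2 - G1" and iso: "isolated V G1 w"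
  shows "psi V G1 G2 b \<subseteq> hitting_graph V xs"
proof -
  define \<tau> where "\<tau> = hit_time V xs"
  have ex: "no_isolated V (set (take (length xs) xs))" using noiso by simp
  have t: "no_isolated V (set (take \<tau> xs))" unfolding \<tau>_def hit_time_def by (rule LeastI[of "\<lambda>i. no_isolated V (set (take i xs))", OF ex])
  have key: "m < \<tau>" if "v \<in> V" "\<And>e. e \<in> set (take m xs) \<Longrightarrow> v \<notin> e" for m v
  proof (rule ccontr)
    assume "\<not> m < \<tau>"
    then have "set (take \<tau> xs) \<subseteq> set (take m xs)" by (intro set_take_subset_set_take) auto
    then show False using t that by (auto simp: no_isolated_def isolated_def)
  qed
  have ta: "take (length a) xs = a" using xs by simp
  have la: "length a < \<tau>"
    using iso ta sa by (intro key[of w]) (auto simp: isolated_def)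
  have G1sub: "G1 \<subseteq> hitting_graph V xs"
  proof -
    have "set (take (length a) xs) \<subseteq> set (take \<tau> xs)" using la by (intro set_take_subset_set_take) auto
    then show ?thesis using ta sa by (simp add: hitting_graph_def \<tau>_def)
  qed
  define I where "I = {v\<in>V. isolated V G1 v}"
  show ?thesis
  proof (cases "(\<exists>v\<in>I. {e\<in>G2. v \<in> e} = {}) \<or> (\<exists>u\<in>I. \<exists>v\<in>I. {u, v} \<in> G2)")
    case True
    then show ?thesis using G1sub by (simp add: psi_def I_def[symmetric] Let_def)
  next
    case False
    have "hd (filter (\<lambda>e. v \<in> e) b) \<in> hitting_graph V xs" if v: "v \<in> I" for v
    proof -
      obtain e0 where e0: "e0 \<in> G2" "v \<in> e0" using False v by blast
      have "e0 \<notin> G1" using v e0 by (auto simp: I_def isolated_def)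
      then have "e0 \<in> set b" using sb e0 by auto
      then have "filter (\<lambda>e. v \<in> e) b \<noteq> []" using e0 by (auto simp: filter_empty_conv)
      then obtain e ys where fe: "filter (\<lambda>e. v \<in> e) b = e # ys" by (cases "filter (\<lambda>e. v \<in> e) b") auto
      then obtain us vs where b: "b = us @ e # vs" "\<forall>u\<in>set us. v \<notin> u" "v \<in> e"
        by (auto simp: filter_eq_Cons_iff)
      have tk: "take (length a + length us) xs = a @ us" using xs b by simp
      have "length a + length us < \<tau>"
        using v b(2) tk sa by (intro key[of v]) (auto simp: I_def isolated_def)
      then have "set (take (Suc (length a + length us)) xs) \<subseteq> set (take \<tau> xs)"
        by (intro set_take_subset_set_take) auto
      moreover have "take (Suc (length a + length us)) xs = a @ us @ [e]" using xs b by simp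
      ultimately have "e \<in> hitting_graph V xs" by (auto simp: hitting_graph_def \<tau>_def)
      then show ?thesis using fe by simp
    qed
    then show ?thesis using G1sub False by (auto simp: psi_def I_def[symmetric] Let_def)
  qed
qed



lemma bern_thin:
  assumes "0 \<le> p" "p \<le> 1" "0 \<le> r" "r \<le> 1"
  shows "bind_pmf (bernoulli_pmf p) (\<lambda>b. if b then bernoulli_pmf r else return_pmf False) = bernoulli_pmf (p * r)"
proof (rule pmf_eqI)
  fix x :: bool
  have pr: "0 \<le> p * r" "p * r \<le> 1" using assms by (auto intro: mult_le_one)
  show "pmf (bind_pmf (bernoulli_pmf p) (\<lambda>b. if b then bernoulli_pmf r else return_pmf False)) x = pmf (bernoulli_pmf (p * r)) x"
    using assms pr by (cases x) (simp_all add: pmf_bind algebra_simps)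
qed

lemma nested_rs:
  assumes fE: "finite E" and "0 \<le> p" "p \<le> 1" "0 \<le> r" "r \<le> 1"
  shows "bind_pmf (random_subgraph E p) (\<lambda>G2. random_subgraph G2 r) = random_subgraph E (p * r)"
proof -
  define q where "q = (\<lambda>b. if b then bernoulli_pmf r else return_pmf False)"
  define H where "H = (\<lambda>g. {e\<in>E. g e})"
  have "bind_pmf (random_subgraph E p) (\<lambda>G2. random_subgraph G2 r) =
        bind_pmf (Pi_pmf E False (\<lambda>_. bernoulli_pmf p)) (\<lambda>f. random_subgraph {e\<in>E. f e} r)"
    unfolding random_subgraph_def[of E] by (simp add: bind_map_pmf)
  also have "\<dots> = bind_pmf (Pi_pmf E False (\<lambda>_. bernoulli_pmf p)) (\<lambda>f. map_pmf H (Pi_pmf E False (\<lambda>e. q (f e))))"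
  proof (intro bind_pmf_cong refl)
    fix f :: "nat set \<Rightarrow> bool"
    have "Pi_pmf {e\<in>E. f e} False (\<lambda>_. bernoulli_pmf r) = Pi_pmf E False (\<lambda>e. q (f e))"
      unfolding q_def using fE by (subst Pi_pmf_if_set[symmetric]) (auto intro: Pi_pmf_cong)
    moreover have "map_pmf (\<lambda>g. {e\<in>{e\<in>E. f e}. g e}) (Pi_pmf E False (\<lambda>e. q (f e))) = map_pmf H (Pi_pmf E False (\<lambda>e. q (f e)))"
    proof (intro map_pmf_cong refl)
      fix g assume g: "g \<in> set_pmf (Pi_pmf E False (\<lambda>e. q (f e)))"
      have "g e \<Longrightarrow> f e" for e
      proof -
        assume ge: "g e"
        have "g \<in> PiE_dflt E False (set_pmf \<circ> (\<lambda>e. q (f e)))" by (rule subsetD[OF set_Pi_pmf_subset'[OF fE] g])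
        then have "(e \<in> E \<longrightarrow> g e \<in> set_pmf (q (f e))) \<and> (e \<notin> E \<longrightarrow> g e = False)"
          unfolding PiE_dflt_def by simp
        then show "f e" using ge by (cases "f e") (auto simp: q_def)
      qed
      then show "{e\<in>{e\<in>E. f e}. g e} = H g" by (auto simp: H_def)
    qed
    ultimately show "random_subgraph {e\<in>E. f e} r = map_pmf H (Pi_pmf E False (\<lambda>e. q (f e)))"
      unfolding random_subgraph_def by simp
  qed
  also have "\<dots> = map_pmf H (bind_pmf (Pi_pmf E False (\<lambda>_. bernoulli_pmf p)) (\<lambda>f. Pi_pmf E False (\<lambda>e. q (f e))))"
    by (simp add: map_bind_pmf)
  also have "bind_pmf (Pi_pmf E False (\<lambda>_. bernoulli_pmf p)) (\<lambda>f. Pi_pmf E False (\<lambda>e. q (f e)))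
      = Pi_pmf E False (\<lambda>e. bind_pmf (bernoulli_pmf p) q)"
    by (rule Pi_pmf_bind[symmetric, OF fE])
  also have "bind_pmf (bernoulli_pmf p) q = bernoulli_pmf (p * r)"
    unfolding q_def using assms(2-5) by (rule bern_thin)
  finally show ?thesis unfolding random_subgraph_def H_def .
qed

lemma prob_prod_sets:
  fixes M :: "'a pmf" and N :: "'b pmf"
  shows "measure_pmf.prob (pair_pmf M N) (A \<times> B) = measure_pmf.prob M A * measure_pmf.prob N B"
proof -
  have "measure_pmf.prob (pair_pmf M N) (A \<times> B) = measure_pmf.prob (pair_pmf M N) ((A \<times> B) \<inter> set_pmf (pair_pmf M N))"
    by (rule measure_Int_set_pmf[symmetric])
  also have "(A \<times> B) \<inter> set_pmf (pair_pmf M N) = (A \<inter> set_pmf M) \<times> (B \<inter> set_pmf N)" by auto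
  also have "measure_pmf.prob (pair_pmf M N) \<dots> = measure_pmf.prob M (A \<inter> set_pmf M) * measure_pmf.prob N (B \<inter> set_pmf N)"
    by (rule measure_pmf_prob_product) auto
  finally show ?thesis by (simp add: measure_Int_set_pmf)
qed

lemma prob_some_true:
  assumes "finite U" "0 \<le> p" "p \<le> 1"
  shows "measure_pmf.prob (Pi_pmf U False (\<lambda>_. bernoulli_pmf p)) {f. \<exists>e\<in>U. f e} = 1 - (1 - p) ^ card U"
proof -
  have "{f. \<exists>e\<in>U. f e} = UNIV - Pi U (\<lambda>_. {False})" by auto
  then have "measure_pmf.prob (Pi_pmf U False (\<lambda>_. bernoulli_pmf p)) {f. \<exists>e\<in>U. f e}
     = 1 - measure_pmf.prob (Pi_pmf U False (\<lambda>_. bernoulli_pmf p)) (Pi U (\<lambda>_. {False}))"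
    using measure_pmf.prob_compl[of "Pi U (\<lambda>_. {False})" "Pi_pmf U False (\<lambda>_. bernoulli_pmf p)"] by simp
  also have "measure_pmf.prob (Pi_pmf U False (\<lambda>_. bernoulli_pmf p)) (Pi U (\<lambda>_. {False})) = (\<Prod>x\<in>U. measure_pmf.prob (bernoulli_pmf p) {False})"
    by (rule measure_Pi_pmf_Pi[OF assms(1)])
  also have "\<dots> = (1 - p) ^ card U" using assms by (simp add: measure_pmf_single)
  finally show ?thesis .
qed

lemma prob_all_hit:
  fixes S :: "'c \<Rightarrow> 'a set"
  assumes "finite C" "0 \<le> p" "p \<le> 1"
  shows "finite E \<Longrightarrow> (\<And>c. c \<in> C \<Longrightarrow> S c \<subseteq> E) \<Longrightarrow>
    (\<And>c c'. c \<in> C \<Longrightarrow> c' \<in> C \<Longrightarrow> c \<noteq> c' \<Longrightarrow> S c \<inter> S c' = {}) \<Longrightarrow>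
    measure_pmf.prob (Pi_pmf E False (\<lambda>_. bernoulli_pmf p)) {f. \<forall>c\<in>C. \<exists>e\<in>S c. f e}
      = (\<Prod>c\<in>C. 1 - (1 - p) ^ card (S c))"
  using assms(1)
proof (induction C arbitrary: E rule: finite_induct)
  case empty
  then show ?case by simp
next
  case (insert c C E)
  define U where "U = S c"
  define W where "W = E - U"
  have fU: "finite U" and fW: "finite W" using insert.prems(1,2) by (auto simp: U_def W_def intro: finite_subset)
  have EUW: "E = U \<union> W" using insert.prems(2) by (auto simp: U_def W_def)
  have SW: "S c' \<subseteq> W" if "c' \<in> C" for c'
    using insert.prems(2,3)[of c'] insert.prems(3)[of c c'] that insert.hyps(2) by (auto simp: U_def W_def)
  define mg where "mg = (\<lambda>(f :: 'a \<Rightarrow> bool, g :: 'a \<Rightarrow> bool) x. if x \<in> U then f x else g x)"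
  have "Pi_pmf E False (\<lambda>_. bernoulli_pmf p) = map_pmf mg (pair_pmf (Pi_pmf U False (\<lambda>_. bernoulli_pmf p)) (Pi_pmf W False (\<lambda>_. bernoulli_pmf p)))"
    unfolding EUW mg_def by (rule Pi_pmf_union[OF fU fW]) (auto simp: U_def W_def)
  then have "measure_pmf.prob (Pi_pmf E False (\<lambda>_. bernoulli_pmf p)) {f. \<forall>c\<in>insert c C. \<exists>e\<in>S c. f e}
     = measure_pmf.prob (pair_pmf (Pi_pmf U False (\<lambda>_. bernoulli_pmf p)) (Pi_pmf W False (\<lambda>_. bernoulli_pmf p)))
         (mg -` {f. \<forall>c\<in>insert c C. \<exists>e\<in>S c. f e})"
    by simp
  also have "mg -` {f. \<forall>c\<in>insert c C. \<exists>e\<in>S c. f e} = {f. \<exists>e\<in>U. f e} \<times> {g. \<forall>c\<in>C. \<exists>e\<in>S c. g e}"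
  proof -
    have UW: "e \<notin> U" if "c' \<in> C" "e \<in> S c'" for c' e using SW[OF that(1)] that(2) by (auto simp: W_def)
    have a: "(\<exists>e\<in>S c. mg (f, g) e) \<longleftrightarrow> (\<exists>e\<in>U. f e)" for f g by (auto simp: mg_def U_def)
    have b: "(\<exists>e\<in>S c'. mg (f, g) e) \<longleftrightarrow> (\<exists>e\<in>S c'. g e)" if "c' \<in> C" for f g c'
      using UW[OF that] by (auto simp: mg_def)
    show ?thesis
    proof (rule set_eqI)
      fix x :: "('a \<Rightarrow> bool) \<times> ('a \<Rightarrow> bool)"
      obtain f g where x: "x = (f, g)" by (cases x)
      show "x \<in> mg -` {f. \<forall>c\<in>insert c C. \<exists>e\<in>S c. f e} \<longleftrightarrow> x \<in> {f. \<exists>e\<in>U. f e} \<times> {g. \<forall>c\<in>C. \<exists>e\<in>S c. g e}"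
        unfolding x using a[of f g] b[of _ f g] by auto
    qed
  qed
  also have "measure_pmf.prob (pair_pmf (Pi_pmf U False (\<lambda>_. bernoulli_pmf p)) (Pi_pmf W False (\<lambda>_. bernoulli_pmf p))) \<dots>
     = (1 - (1 - p) ^ card U) * (\<Prod>c\<in>C. 1 - (1 - p) ^ card (S c))"
    unfolding prob_prod_sets
    using prob_some_true[OF fU assms(2,3)] insert.IH[OF fW SW] insert.prems(3) by simp
  finally show ?case using insert.hyps by (simp add: U_def)
qed

lemma noiso_bound:
  assumes fE: "finite E" and "0 \<le> p" "p \<le> 1" and fC: "finite C" and CV: "C \<subseteq> V"
    and deg: "\<And>c. c \<in> C \<Longrightarrow> card {e\<in>E. c \<in> e} = k"
    and dj: "\<And>c c' e. c \<in> C \<Longrightarrow> c' \<in> C \<Longrightarrow> c \<noteq> c' \<Longrightarrow> e \<in> E \<Longrightarrow> c \<in> e \<Longrightarrow> c' \<in> e \<Longrightarrow> False"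
  shows "measure_pmf.prob (random_subgraph E p) {G. no_isolated V G} \<le> (1 - (1 - p) ^ k) ^ card C"
proof -
  define S where "S = (\<lambda>c. {e\<in>E. c \<in> e})"
  have "measure_pmf.prob (random_subgraph E p) {G. no_isolated V G}
      = measure_pmf.prob (Pi_pmf E False (\<lambda>_. bernoulli_pmf p)) {f. no_isolated V {e\<in>E. f e}}"
    unfolding random_subgraph_def by simp
  also have "\<dots> \<le> measure_pmf.prob (Pi_pmf E False (\<lambda>_. bernoulli_pmf p)) {f. \<forall>c\<in>C. \<exists>e\<in>S c. f e}"
    using CV by (intro measure_pmf.finite_measure_mono) (auto simp: no_isolated_def isolated_def S_def)
  also have "\<dots> = (\<Prod>c\<in>C. 1 - (1 - p) ^ card (S c))"
    using dj by (intro prob_all_hit[OF fC assms(2,3) fE]) (auto simp: S_def)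
  also have "\<dots> = (1 - (1 - p) ^ k) ^ card C"
    using deg by (simp add: S_def)
  finally show ?thesis .
qed



lemma coupling_bound:
  assumes fV: "finite V" and fE: "finite E" and tw: "two_sets E" and noE: "no_isolated V E"
    and mono: "mono_increasing E Q"
    and p: "0 \<le> p2 n k" "p2 n k \<le> 1" and r: "0 \<le> p1 n k / p2 n k" "p1 n k / p2 n k \<le> 1"
  shows "measure_pmf.prob (GH n k V E) Q \<le>
           measure_pmf.prob (graph_process E) {xs. hitting_graph V xs \<in> Q}
         + measure_pmf.prob (random_subgraph E (p2 n k * (p1 n k / p2 n k))) {G. no_isolated V G}"
proof -
  define p where "p = p2 n k"
  define r where "r = p1 n k / p2 n k"
  define \<Omega> where "\<Omega> = Om E p r"
  define \<Psi> where "\<Psi> = (\<lambda>(G1, G2, a :: nat set list, b, c :: nat set list). psi V G1 G2 b)"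
  define cat where "cat = (\<lambda>(G1 :: nat set set, G2 :: nat set set, a :: nat set list, b :: nat set list, c). a @ b @ c)"
  define g1 where "g1 = (\<lambda>(G1 :: nat set set, G2 :: nat set set, a :: nat set list, b :: nat set list, c :: nat set list). G1)"
  have pr: "0 \<le> p" "p \<le> 1" "0 \<le> r" "r \<le> 1" using p r by (auto simp: p_def r_def)
  have h1: "measure_pmf.prob (GH n k V E) Q = measure_pmf.prob \<Omega> (\<Psi> -` Q)"
    using GH_Om[OF fV fE tw, of n k] by (simp add: \<Omega>_def \<Psi>_def p_def r_def)
  have h2: "measure_pmf.prob (graph_process E) {xs. hitting_graph V xs \<in> Q} = measure_pmf.prob \<Omega> (cat -` {xs. hitting_graph V xs \<in> Q})"
  proof -
    have "graph_process E = map_pmf cat \<Omega>"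
      unfolding graph_process_def perm_def[symmetric] \<Omega>_def cat_def
      using mu_uniform[OF fE pr] mu_Om[of E p r] by simp
    then show ?thesis by simp
  qed
  have h3: "measure_pmf.prob (random_subgraph E (p * r)) {G. no_isolated V G} = measure_pmf.prob \<Omega> (g1 -` {G. no_isolated V G})"
  proof -
    have "map_pmf g1 \<Omega> = bind_pmf (random_subgraph E p) (\<lambda>G2. random_subgraph G2 r)"
      unfolding \<Omega>_def Om_def g1_def map_pmf_def by (simp add: bind_assoc_pmf bind_return_pmf bind_return_pmf')
    also have "\<dots> = random_subgraph E (p * r)" by (rule nested_rs[OF fE pr])
    finally show ?thesis by (metis measure_map_pmf)
  qed
  have sub: "\<Psi> -` Q \<inter> set_pmf \<Omega> \<subseteq> cat -` {xs. hitting_graph V xs \<in> Q} \<union> g1 -` {G. no_isolated V G}"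
  proof
    fix \<omega> assume w: "\<omega> \<in> \<Psi> -` Q \<inter> set_pmf \<Omega>"
    obtain G1 G2 a b c where om: "\<omega> = (G1, G2, a, b, c)" by (cases \<omega>)
    have s: "G1 \<subseteq> G2" "G2 \<subseteq> E" "a \<in> permutations_of_set G1" "b \<in> permutations_of_set (G2 - G1)"
      "c \<in> permutations_of_set (E - G2)" using set_Om[OF fE, of G1 G2 a b c p r] w om by (auto simp: \<Omega>_def)
    have psiQ: "psi V G1 G2 b \<in> Q" using w om by (simp add: \<Psi>_def)
    show "\<omega> \<in> cat -` {xs. hitting_graph V xs \<in> Q} \<union> g1 -` {G. no_isolated V G}"
    proof (cases "no_isolated V G1")
      case True then show ?thesis by (simp add: om g1_def)
    next
      case False
      then obtain w where iso: "isolated V G1 w" by (auto simp: no_isolated_def)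
      define xs where "xs = a @ b @ c"
      have xsp: "xs \<in> permutations_of_set E" using s by (auto simp: permutations_of_set_def xs_def)
      have dist: "distinct xs" and setxs: "set xs = E" using xsp by (auto dest: permutations_of_setD)
      have sa: "set a = G1" and sb: "set b = G2 - G1" using s by (auto dest: permutations_of_setD)
      have "psi V G1 G2 b \<subseteq> hitting_graph V xs"
        by (rule psi_sub_hit[OF _ dist xs_def sa sb iso]) (use noE setxs in simp)
      moreover have "hitting_graph V xs \<subseteq> E"
        unfolding hitting_graph_def using setxs set_take_subset[of _ xs] by simp
      ultimately have "hitting_graph V xs \<in> Q" using mono psiQ unfolding mono_increasing_def by blast
      then show ?thesis by (simp add: om cat_def xs_def)
    qed
  qed
  have "measure_pmf.prob \<Omega> (\<Psi> -` Q) = measure_pmf.prob \<Omega> (\<Psi> -` Q \<inter> set_pmf \<Omega>)"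
    by (rule measure_Int_set_pmf[symmetric])
  also have "\<dots> \<le> measure_pmf.prob \<Omega> (cat -` {xs. hitting_graph V xs \<in> Q} \<union> g1 -` {G. no_isolated V G})"
    by (rule measure_pmf.finite_measure_mono[OF sub]) simp
  also have "\<dots> \<le> measure_pmf.prob \<Omega> (cat -` {xs. hitting_graph V xs \<in> Q}) + measure_pmf.prob \<Omega> (g1 -` {G. no_isolated V G})"
    by (rule measure_subadditive) (simp_all add: measure_pmf.emeasure_finite)
  finally show ?thesis using h1 h2 h3 by (simp add: p_def r_def)
qed



lemma core_bounds:
  fixes n k :: nat
  defines "L \<equiv> ln (real n)" and "L4 \<equiv> ln (ln (ln (ln (real n))))"
  assumes n3: "n \<ge> 3" and km: "real k \<ge> real n / L powr (1/3)"
    and m1: "2 * L \<le> real n / L powr (1/3)"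
    and m2: "2 * L^2 / (real n / L powr (1/3)) \<le> 1"
    and l4: "0 < L4" "L4 \<le> L"
  shows "0 \<le> p1 n k" "p1 n k \<le> 1/2" "0 < p2 n k" "p2 n k \<le> 1" "0 \<le> p1 n k / p2 n k" "p1 n k / p2 n k \<le> 1"
    "(1 - (1 - p1 n k) ^ k) ^ n \<le> exp (- exp (L4 - 1))"
proof -
  define m where "m = real n / L powr (1/3)"
  have Lpos: "L > 0" unfolding L_def using n3 by simp
  have mpos: "m > 0" unfolding m_def using Lpos n3 by simp
  have km': "m \<le> real k" using km by (simp add: m_def)
  have kpos: "real k > 0" using mpos km' by linarith
  have twoL: "2 * L \<le> real k" using m1 km' by (simp add: m_def)
  have p1eq: "p1 n k = (L - L4) / real k" by (simp add: p1_def L_def L4_def)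
  have p2eq: "p2 n k = (L + L4) / real k" by (simp add: p2_def L_def L4_def)
  show a: "0 \<le> p1 n k" unfolding p1eq using l4 kpos by simp
  show b: "p1 n k \<le> 1/2" unfolding p1eq using l4 kpos twoL by (simp add: field_simps)
  show c: "0 < p2 n k" unfolding p2eq using l4 Lpos kpos by simp
  show "p2 n k \<le> 1" unfolding p2eq using l4 kpos twoL by (simp add: field_simps)
  show "0 \<le> p1 n k / p2 n k" using a c by simp
  have "p1 n k \<le> p2 n k" unfolding p1eq p2eq using l4 kpos by (intro divide_right_mono) auto
  then show "p1 n k / p2 n k \<le> 1" using c by simp
  define p where "p = p1 n k"
  define q where "q = 1 - p"
  have q: "q \<ge> 1/2" "q \<le> 1" using a b by (auto simp: q_def p_def)
  have kp2: "real k * p^2 \<le> 1/2"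
  proof -
    have "real k * p^2 = (L - L4)^2 / real k" unfolding p_def p1eq using kpos by (simp add: power2_eq_square field_simps)
    also have "\<dots> \<le> L^2 / real k" using l4 kpos by (intro divide_right_mono power_mono) auto
    also have "\<dots> \<le> L^2 / m" using mpos km' by (intro divide_left_mono) auto
    also have "\<dots> \<le> 1/2"
    proof -
      have "2 * L^2 / m = 2 * (L^2 / m)" by simp
      then show ?thesis using m2[folded m_def] by linarith
    qed
    finally show ?thesis .
  qed
  have lnq: "ln q \<ge> - p - 2 * p^2" unfolding q_def using a b by (intro ln_one_minus_pos_lower_bound) (auto simp: p_def)
  have kp: "real k * p = L - L4" unfolding p_def p1eq using kpos by simp
  define x where "x = q ^ k"
  have x: "x = exp (real k * ln q)"
  proof -
    have "exp (real k * ln q) = exp (ln q) ^ k" by (rule exp_of_nat_mult)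
    also have "exp (ln q) = q" using q by simp
    finally show ?thesis by (simp add: x_def)
  qed
  have "real n * x = exp (L + real k * ln q)" unfolding x L_def using n3 by (simp add: exp_add)
  moreover have "L + real k * ln q \<ge> L4 - 1"
  proof -
    have "real k * ln q \<ge> real k * (- p - 2 * p^2)" using lnq kpos by (intro mult_left_mono) auto
    then show ?thesis using kp kp2 by (simp add: algebra_simps)
  qed
  ultimately have nx: "real n * x \<ge> exp (L4 - 1)" by simp
  have x01: "0 \<le> x" "x \<le> 1" unfolding x_def using q by (auto intro: power_le_one)
  have "(1 - x) ^ n \<le> exp (- x) ^ n"
    using x01 by (intro power_mono) (auto simp: exp_ge_add_one_self[of "-x", simplified])
  also have "\<dots> = exp (- (real n * x))" using exp_of_nat_mult[of n "-x"] by simp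
  also have "\<dots> \<le> exp (- exp (L4 - 1))" using nx by simp
  finally show "(1 - (1 - p1 n k) ^ k) ^ n \<le> exp (- exp (L4 - 1))" by (simp add: x_def q_def p_def)
qed



lemma graph_facts:
  assumes bip: "bipartite_graph {..<2*n} E" and reg: "regular_graph k {..<2*n} E"
  shows "finite E" "two_sets E" "k > 0 \<Longrightarrow> no_isolated {..<2*n} E"
    "\<exists>C. C \<subseteq> {..<2*n} \<and> n \<le> card C \<and> (\<forall>c\<in>C. card {e\<in>E. c \<in> e} = k) \<and>
        (\<forall>c c' e. c \<in> C \<longrightarrow> c' \<in> C \<longrightarrow> c \<noteq> c' \<longrightarrow> e \<in> E \<longrightarrow> c \<in> e \<longrightarrow> c' \<in> e \<longrightarrow> False)"
proof -
  let ?V = "{..<2*n}"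
  have ed: "\<forall>e\<in>E. \<exists>u\<in>?V. \<exists>v\<in>?V. u \<noteq> v \<and> e = {u, v}" and deg: "\<forall>v\<in>?V. card {e\<in>E. v \<in> e} = k"
    using reg by (auto simp: regular_graph_def)
  have "E \<subseteq> Pow ?V" using ed by fastforce
  then show "finite E" by (rule finite_subset) simp
  show "two_sets E" unfolding two_sets_def using ed by blast
  show "no_isolated ?V E" if "k > 0"
  proof (unfold no_isolated_def isolated_def, intro ballI notI)
    fix v assume v: "v \<in> ?V" and h: "v \<in> ?V \<and> (\<forall>e\<in>E. v \<notin> e)"
    then have "{e\<in>E. v \<in> e} = {}" by auto
    moreover have "card {e\<in>E. v \<in> e} = k" using deg v by blast
    ultimately have "k = 0" by (metis card.empty)
    then show False using that by simp
  qed
  obtain A B where AB: "A \<union> B = ?V" "A \<inter> B = {}" "\<forall>e\<in>E. \<exists>a\<in>A. \<exists>b\<in>B. e = {a, b}"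
    using bip by (auto simp: bipartite_graph_def)
  have fA: "finite A" and fB: "finite B" using AB(1) by (metis finite_Un finite_lessThan)+
  have "card A + card B = 2 * n" using AB(1,2) fA fB card_Un_disjoint by (metis card_lessThan)
  then have big: "n \<le> card A \<or> n \<le> card B" by linarith
  have dj: "False" if h: "C = A \<or> C = B" "c \<in> C" "c' \<in> C" "c \<noteq> c'" "e \<in> E" "c \<in> e" "c' \<in> e" for C c c' e
  proof -
    obtain a b where ab: "a \<in> A" "b \<in> B" "e = {a, b}" using AB(3) h(5) by blast
    have "{c, c'} = {a, b}" using h(2-7) ab(3) by auto
    then have "a \<in> C" "b \<in> C" using h(2,3) by (auto simp: doubleton_eq_iff)
    then show False using ab AB(2) h(1) by auto
  qed
  show "\<exists>C. C \<subseteq> ?V \<and> n \<le> card C \<and> (\<forall>c\<in>C. card {e\<in>E. c \<in> e} = k) \<and>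
        (\<forall>c c' e. c \<in> C \<longrightarrow> c' \<in> C \<longrightarrow> c \<noteq> c' \<longrightarrow> e \<in> E \<longrightarrow> c \<in> e \<longrightarrow> c' \<in> e \<longrightarrow> False)"
  proof (cases "n \<le> card A")
    case True
    then show ?thesis using AB(1) deg dj[of A] by (intro exI[of _ A]) auto
  next
    case False
    then show ?thesis using big AB(1) deg dj[of B] by (intro exI[of _ B]) auto
  qed
qed



lemma per_n_bound:
  fixes n kk :: nat and E :: "nat set set" and QQ :: "nat set set set"
  defines "L \<equiv> ln (real n)" and "L4 \<equiv> ln (ln (ln (ln (real n))))"
  assumes graph: "bipartite_graph {..<2*n} E \<and> regular_graph kk {..<2*n} E"
    and mono: "mono_increasing E QQ"
    and n3: "n \<ge> 3" and dl: "1 \<le> real kk / real n * L powr (1/3)"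
    and m1: "2 * L \<le> real n / L powr (1/3)"
    and m2: "2 * L^2 / (real n / L powr (1/3)) \<le> 1"
    and l4: "0 < L4" "L4 \<le> L"
  shows "measure_pmf.prob (GH n kk {..<2*n} E) QQ - exp (- exp (L4 - 1))
           \<le> measure_pmf.prob (graph_process E) {xs. hitting_graph {..<2*n} xs \<in> QQ}"
proof -
  have Lpos: "L > 0" unfolding L_def using n3 by simp
  have km: "real kk \<ge> real n / L powr (1/3)"
  proof -
    have "1 * (real n / L powr (1/3)) \<le> (real kk / real n * L powr (1/3)) * (real n / L powr (1/3))"
      by (rule mult_right_mono[OF dl]) (use Lpos in simp)
    also have "\<dots> = real kk" using n3 Lpos by simp
    finally show ?thesis by simp
  qed
  note cb = core_bounds[OF n3 km[unfolded L_def] m1[unfolded L_def] m2[unfolded L_def] l4[unfolded L_def L4_def]]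
  have kpos: "kk > 0"
  proof -
    have "real n / L powr (1/3) > 0" using n3 Lpos by simp
    then show ?thesis using km by simp
  qed
  have fE: "finite E" and tw: "two_sets E" and noE: "no_isolated {..<2*n} E"
    using graph_facts[of n E kk] graph kpos by auto
  obtain C where C: "C \<subseteq> {..<2*n}" "n \<le> card C" "\<forall>c\<in>C. card {e\<in>E. c \<in> e} = kk"
    "\<forall>c c' e. c \<in> C \<longrightarrow> c' \<in> C \<longrightarrow> c \<noteq> c' \<longrightarrow> e \<in> E \<longrightarrow> c \<in> e \<longrightarrow> c' \<in> e \<longrightarrow> False"
    using graph_facts(4)[of n E kk] graph by blast
  have fC: "finite C" using C(1) finite_subset by blast
  have pp: "p2 n kk * (p1 n kk / p2 n kk) = p1 n kk" using cb(3) by simp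
  have "measure_pmf.prob (GH n kk {..<2*n} E) QQ \<le>
           measure_pmf.prob (graph_process E) {xs. hitting_graph {..<2*n} xs \<in> QQ}
         + measure_pmf.prob (random_subgraph E (p2 n kk * (p1 n kk / p2 n kk))) {G. no_isolated {..<2*n} G}"
    by (rule coupling_bound[OF _ fE tw noE mono]) (use cb in auto)
  also have "measure_pmf.prob (random_subgraph E (p2 n kk * (p1 n kk / p2 n kk))) {G. no_isolated {..<2*n} G}
      \<le> (1 - (1 - p1 n kk) ^ kk) ^ card C"
  proof -
    have p1le: "p1 n kk \<le> 1" using cb(2) by simp
    have "measure_pmf.prob (random_subgraph E (p1 n kk)) {G. no_isolated {..<2*n} G} \<le> (1 - (1 - p1 n kk) ^ kk) ^ card C"
      by (rule noiso_bound[OF fE cb(1) p1le fC C(1)]) (use C(3,4) in blast)+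
    then show ?thesis unfolding pp .
  qed
  also have "(1 - (1 - p1 n kk) ^ kk) ^ card C \<le> (1 - (1 - p1 n kk) ^ kk) ^ n"
  proof (rule power_decreasing[OF C(2)])
    have "0 \<le> (1 - p1 n kk) ^ kk" "(1 - p1 n kk) ^ kk \<le> 1" using cb(1,2) by (auto intro: power_le_one)
    then show "0 \<le> 1 - (1 - p1 n kk) ^ kk" "1 - (1 - p1 n kk) ^ kk \<le> 1" by auto
  qed
  also have "\<dots> \<le> exp (- exp (L4 - 1))" unfolding L4_def by (rule cb(7))
  finally show ?thesis by simp
qed

theorem claim3p1:
  fixes k :: "nat \<Rightarrow> nat"
    and G :: "nat \<Rightarrow> nat set set"
    and Q :: "nat \<Rightarrow> nat set set set"
  assumes delta: "filterlim (\<lambda>n. (real (k n) / real n) * ln (real n) powr (1/3)) at_top sequentially"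
    and graph: "\<And>n. bipartite_graph {..<2*n} (G n) \<and> regular_graph (k n) {..<2*n} (G n)"
    and mono: "\<And>n. mono_increasing (G n) (Q n)"
    and GH_aas: "(\<lambda>n. measure_pmf.prob (GH n (k n) {..<2*n} (G n)) (Q n)) \<longlonglongrightarrow> 1"
  shows "(\<lambda>n. measure_pmf.prob (graph_process (G n))
            {xs. hitting_graph {..<2*n} xs \<in> Q n}) \<longlonglongrightarrow> 1"
proof (rule tendsto_sandwich)
  define b where "b = (\<lambda>n::nat. exp (- exp (ln (ln (ln (ln (real n)))) - 1)))"
  have b0: "b \<longlonglongrightarrow> 0" unfolding b_def by real_asymp
  have ev1: "eventually (\<lambda>n. 1 \<le> (real (k n) / real n) * ln (real n) powr (1/3)) sequentially"
    using delta by (simp add: filterlim_at_top)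
  have ev2: "eventually (\<lambda>n::nat. 2 * ln (real n) \<le> real n / ln (real n) powr (1/3)) sequentially" by real_asymp
  have ev3: "eventually (\<lambda>n::nat. 2 * (ln (real n))^2 / (real n / ln (real n) powr (1/3)) \<le> 1) sequentially" by real_asymp
  have ev4: "eventually (\<lambda>n::nat. 0 < ln (ln (ln (ln (real n))))) sequentially" by real_asymp
  have ev5: "eventually (\<lambda>n::nat. ln (ln (ln (ln (real n)))) \<le> ln (real n)) sequentially" by real_asymp
  have ev6: "eventually (\<lambda>n::nat. n \<ge> 3) sequentially" by (rule eventually_ge_at_top)
  show "eventually (\<lambda>n. measure_pmf.prob (GH n (k n) {..<2*n} (G n)) (Q n) - b n
          \<le> measure_pmf.prob (graph_process (G n)) {xs. hitting_graph {..<2*n} xs \<in> Q n}) sequentially"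
    using ev1 ev2 ev3 ev4 ev5 ev6
  proof eventually_elim
    case (elim n)
    then show ?case unfolding b_def
      by (intro per_n_bound[OF graph mono]) auto
  qed
  show "eventually (\<lambda>n. measure_pmf.prob (graph_process (G n)) {xs. hitting_graph {..<2*n} xs \<in> Q n} \<le> 1) sequentially"
    by simp
  show "(\<lambda>n. measure_pmf.prob (GH n (k n) {..<2*n} (G n)) (Q n) - b n) \<longlonglongrightarrow> 1"
    using tendsto_diff[OF GH_aas b0] by simp
  show "(\<lambda>n. 1 :: real) \<longlonglongrightarrow> 1" by simp
qed

end
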